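(* In the setting of the context, suppose $\mathbb{P}(q(\mathcal{X})<1)>0$, and let $B\ge2$ be an integer with $(B+1)\alpha\in\mathbb{N}$. Then $k_B-k_{B-1}=1$ and $k_{B+1}-k_B=0$, and consequently $\mathrm{Pow}(B-1)<\mathrm{Pow}(B)$ and $\mathrm{Pow}(B+1)<\mathrm{Pow}(B)$.
   Context: Let $\mathcal{X}$ be a random observed dataset taking values in a space on which a finite group $\mathcal{G}$ acts (write $\mathcal{X}^\pi$ for the action of $\pi\in\mathcal{G}$; the identity of $\mathcal{G}$ fixes every dataset), and let $T$ be a real-valued test statistic. Fix $\alpha\in(0,1)$. For an integer $B\ge1$, let $\pi_1,\dots,\pi_B$ be i.i.d. uniform on $\mathcal{G}$, independent of $\mathcal{X}$. The Monte Carlo permutation $p$-value is $p_B(\mathcal{X})=\bigl(1+\sum_{i=1}^B \mathbf{1}\{T(\mathcal{X}^{\pi_i})\ge T(\mathcal{X})\}\bigr)/(B+1)$, and the test rejects iff $p_B(\mathcal{X})\le\alpha$. Define $q(\mathcal{X})=\mathbb{P}(T(\mathcal{X}^\pi)\ge T(\mathcal{X})\mid \mathcal{X})$ for $\pi$ uniform on $\mathcal{G}$ independent of $\mathcal{X}$ (so $q(\mathcal{X})\in[1/|\mathcal{G}|,1]$), $R_B=\sum_{i=1}^B \mathbf{1}\{T(\mathcal{X}^{\pi_i})\ge T(\mathcal{X})\}$ (so $R_B\mid\mathcal{X}\sim\mathrm{Binomial}(B,q(\mathcal{X}))$), and the critical count $k_B=\lfloor (B+1)\alpha\rfloor-1$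 for integers $B\ge 0$. Then $\{p_B(\mathcal{X})\le\alpha\}=\{R_B\le k_B\}$. The conditional rejection probability is $\phi_B(\mathcal{X})=\mathbb{P}(R_B\le k_B\mid\mathcal{X})$ and the (unconditional) power is $\mathrm{Pow}(B)=\mathbb{E}[\phi_B(\mathcal{X})]=\mathbb{E}\bigl[\mathbb{P}(\mathrm{Binomial}(B,q(\mathcal{X}))\le k_B\mid\mathcal{X})\bigr]$, for $B\ge1$. *)

theory Defs
  imports "HOL-Probability.Probability" "HOL-Algebra.Group"
begin

definition exceed_prob :: "('g, 'b) monoid_scheme \<Rightarrow> ('g \<Rightarrow> 'x \<Rightarrow> 'x) \<Rightarrow> ('x \<Rightarrow> real) \<Rightarrow> 'x \<Rightarrow> real" where
  "exceed_prob G act T x =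
     measure_pmf.prob (pmf_of_set (carrier G)) {g. T (act g x) \<ge> T x}"

definition crit_count :: "real \<Rightarrow> nat \<Rightarrow> int" where
  "crit_count \<alpha> B = \<lfloor>(real B + 1) * \<alpha>\<rfloor> - 1"

definition cond_rej :: "real \<Rightarrow> nat \<Rightarrow> real \<Rightarrow> real" where
  "cond_rej \<alpha> B q = measure_pmf.prob (binomial_pmf B q) {j. int j \<le> crit_count \<alpha> B}"

definition mc_power :: "'w measure \<Rightarrow> ('g, 'b) monoid_scheme \<Rightarrow> ('g \<Rightarrow> 'x \<Rightarrow> 'x) \<Rightarrow> ('x \<Rightarrow> real)
    \<Rightarrow> ('w \<Rightarrow> 'x) \<Rightarrow> real \<Rightarrow> nat \<Rightarrow> real" where
  "mc_power M G act T X \<alpha> B = integral\<^sup>L M (\<lambda>\<omega>. cond_rej \<alpha> B (exceed_prob G act T (X \<omega>)))"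

end

theory Submission
  imports Defs
begin

definition tt :: "nat \<Rightarrow> real \<Rightarrow> nat \<Rightarrow> real" where
  "tt n q j = real (n choose j) * q ^ j * (1 - q) ^ (n - j)"
definition Pk :: "nat \<Rightarrow> real \<Rightarrow> nat \<Rightarrow> real" where
  "Pk n q k = (\<Sum>j\<le>k. tt n q j)"

lemma tt_Suc0: "tt (Suc n) q 0 = (1 - q) * tt n q 0"
  by (simp add: tt_def)

lemma tt_SucSuc: "tt (Suc n) q (Suc j) = (1 - q) * tt n q (Suc j) + q * tt n q j"
proof (cases "j < n")
  case True
  then have e: "n - j = Suc (n - Suc j)" by simp
  show ?thesis unfolding tt_def using True
    by (simp add: e algebra_simps)
next
  case False
  then have "n choose Suc j = 0" by simp
  moreover have "Suc n - Suc j = n - j" by simp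
  ultimately show ?thesis unfolding tt_def by (simp add: algebra_simps)
qed

lemma Pk_Suc: "Pk (Suc n) q k = Pk n q k - q * tt n q k"
proof (induction k)
  case 0
  then show ?case by (simp add: Pk_def tt_Suc0 algebra_simps)
next
  case (Suc k)
  have "Pk (Suc n) q (Suc k) = Pk (Suc n) q k + tt (Suc n) q (Suc k)"
    by (simp add: Pk_def)
  also have "\<dots> = Pk n q (Suc k) - q * tt n q (Suc k)"
    using Suc by (simp add: tt_SucSuc Pk_def algebra_simps)
  finally show ?case .
qed

lemma Pk_diff1: "Pk (Suc n) q k - (if k = 0 then 0 else Pk n q (k - 1)) = (1 - q) * tt n q k"
proof -
  have "Pk n q k = (if k = 0 then 0 else Pk n q (k - 1)) + tt n q k"
    by (cases k) (simp_all add: Pk_def)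
  then show ?thesis using Pk_Suc[of n q k] by (simp add: algebra_simps)
qed

lemma tt_pos: "0 < q \<Longrightarrow> q < 1 \<Longrightarrow> j \<le> n \<Longrightarrow> tt n q j > 0"
  unfolding tt_def by simp

lemma tt_nonneg: "0 \<le> q \<Longrightarrow> q \<le> 1 \<Longrightarrow> tt n q j \<ge> 0"
  unfolding tt_def by simp

lemma tt_le: "0 \<le> q \<Longrightarrow> q \<le> 1 \<Longrightarrow> tt n q j \<le> real (n choose j)"
proof -
  assume a: "0 \<le> q" "q \<le> 1"
  have "q ^ j * (1 - q) ^ (n - j) \<le> 1"
    using a by (intro mult_le_one power_le_one) auto
  then have "real (n choose j) * (q ^ j * (1 - q) ^ (n - j)) \<le> real (n choose j) * 1"
    by (intro mult_left_mono) auto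
  then show ?thesis unfolding tt_def by (simp add: mult.assoc)
qed

lemma Pk_abs: "0 \<le> q \<Longrightarrow> q \<le> 1 \<Longrightarrow> \<bar>Pk n q k\<bar> \<le> (\<Sum>j\<le>k. real (n choose j))"
proof -
  assume a: "0 \<le> q" "q \<le> 1"
  have "\<bar>Pk n q k\<bar> \<le> (\<Sum>j\<le>k. \<bar>tt n q j\<bar>)" unfolding Pk_def by (rule sum_abs)
  also have "\<dots> \<le> (\<Sum>j\<le>k. real (n choose j))"
    using tt_le[OF a] tt_nonneg[OF a] by (intro sum_mono) simp
  finally show ?thesis .
qed

lemma binom_Pk: "0 \<le> q \<Longrightarrow> q \<le> 1 \<Longrightarrow>
  measure_pmf.prob (binomial_pmf n q) {j. int j \<le> int k} = Pk n q k"
proof -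
  assume a: "0 \<le> q" "q \<le> 1"
  have "{j. int j \<le> int k} = {..k}" by auto
  then show ?thesis using a
    by (simp add: measure_measure_pmf_finite pmf_binomial Pk_def tt_def)
qed

lemma binom_neg: "measure_pmf.prob (binomial_pmf n q) {j. int j \<le> -1} = 0"
  by simp


lemma pos_integral:
  fixes g Q :: "'w \<Rightarrow> real"
  assumes "prob_space M" "integrable M g" "\<And>w. 0 \<le> g w"
    and "\<And>w. w \<in> space M \<Longrightarrow> Q w < 1 \<Longrightarrow> 0 < g w"
    and "Q \<in> borel_measurable M"
    and "measure M {w \<in> space M. Q w < 1} > 0"
  shows "integral\<^sup>L M g > 0"
proof (rule ccontr)
  assume "\<not> integral\<^sup>L M g > 0"
  moreover have "integral\<^sup>L M g \<ge> 0" using assms(3) by (simp add: integral_nonneg)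
  ultimately have "integral\<^sup>L M g = 0" by simp
  then have "AE w in M. g w = 0"
    using integral_nonneg_eq_0_iff_AE[OF assms(2)] assms(3) by simp
  then have ae: "AE w in M. \<not> Q w < 1"
    using AE_space by eventually_elim (use assms(4) in force)
  have setm: "{w \<in> space M. Q w < 1} \<in> sets M" using assms(5) by measurable
  have "emeasure M {w \<in> space M. Q w < 1} = 0"
    using ae AE_iff_measurable[OF setm] by simp
  then have "measure M {w \<in> space M. Q w < 1} = 0" by (simp add: measure_def)
  then show False using assms(6) by simp
qed

definition ff :: "nat \<Rightarrow> nat \<Rightarrow> real \<Rightarrow> real" where
  "ff n m q = (if m = 0 then 0 else Pk n q (m - 1))"

lemma cond_rej_ff: "0 \<le> q \<Longrightarrow> q \<le> 1 \<Longrightarrow> crit_count \<alpha> n = int m - 1 \<Longrightarrow> cond_rej \<alpha> n q = ff n m q"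
proof -
  assume a: "0 \<le> q" "q \<le> 1" "crit_count \<alpha> n = int m - 1"
  show ?thesis
  proof (cases m)
    case 0
    then show ?thesis using a by (simp add: cond_rej_def ff_def)
  next
    case (Suc k)
    then have "crit_count \<alpha> n = int k" using a by simp
    then show ?thesis using binom_Pk[OF a(1,2), of n k] Suc by (simp add: cond_rej_def ff_def)
  qed
qed

lemma ff_abs: "0 \<le> q \<Longrightarrow> q \<le> 1 \<Longrightarrow> norm (ff n m q) \<le> (\<Sum>j\<le>m - 1. real (n choose j))"
  unfolding ff_def using Pk_abs[of q n "m - 1"] by (auto intro: sum_nonneg)

theorem mainTheorem7:
  fixes M :: "'w measure" and S :: "'x measure" and G :: "('g, 'b) monoid_scheme"
    and act :: "'g \<Rightarrow> 'x \<Rightarrow> 'x" and T :: "'x \<Rightarrow> real" and X :: "'w \<Rightarrow> 'x"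
    and \<alpha> :: real and B :: nat
  assumes "prob_space M"
    and "group G" and "finite (carrier G)"
    and "\<And>x. act \<one>\<^bsub>G\<^esub> x = x"
    and "\<And>g h x. g \<in> carrier G \<Longrightarrow> h \<in> carrier G \<Longrightarrow> act (g \<otimes>\<^bsub>G\<^esub> h) x = act g (act h x)"
    and "\<And>g. g \<in> carrier G \<Longrightarrow> act g \<in> S \<rightarrow>\<^sub>M S"
    and "T \<in> borel_measurable S"
    and "X \<in> M \<rightarrow>\<^sub>M S"
    and "0 < \<alpha>" and "\<alpha> < 1"
    and "measure M {\<omega> \<in> space M. exceed_prob G act T (X \<omega>) < 1} > 0"
    and "B \<ge> 2"
    and "(real B + 1) * \<alpha> \<in> \<nat>"
  shows "crit_count \<alpha> B - crit_count \<alpha> (B - 1) = 1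
       \<and> crit_count \<alpha> (B + 1) - crit_count \<alpha> B = 0
       \<and> mc_power M G act T X \<alpha> (B - 1) < mc_power M G act T X \<alpha> B
       \<and> mc_power M G act T X \<alpha> (B + 1) < mc_power M G act T X \<alpha> B"
proof -
  note A = assms
  interpret P: prob_space M by (rule A(1))
  define C where "C = carrier G"
  have oneC: "\<one>\<^bsub>G\<^esub> \<in> C" unfolding C_def using A(2) by (simp add: group.is_monoid monoid.one_closed)
  have finC: "finite C" using A(3) C_def by simp
  have Cne: "C \<noteq> {}" using oneC by auto
  have ep: "exceed_prob G act T x = (\<Sum>g\<in>C. if T x \<le> T (act g x) then 1 else 0) / real (card C)" for x
  proof -
    have "real (card (C \<inter> {g. T x \<le> T (act g x)})) = (\<Sum>g\<in>C. if T x \<le> T (act g x) then 1 else 0)"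
      using finC by (simp add: sum.If_cases Int_def)
    then show ?thesis unfolding exceed_prob_def C_def[symmetric]
      using measure_pmf_of_set[OF Cne finC] by simp
  qed
  have epb: "0 < exceed_prob G act T x \<and> exceed_prob G act T x \<le> 1" for x
  proof -
    have m: "measure_pmf.prob (pmf_of_set C) {g. T x \<le> T (act g x)} = real (card (C \<inter> {g. T x \<le> T (act g x)})) / real (card C)"
      using measure_pmf_of_set[OF Cne finC] by simp
    have "\<one>\<^bsub>G\<^esub> \<in> C \<inter> {g. T x \<le> T (act g x)}" using oneC A(4) by simp
    then have "card (C \<inter> {g. T x \<le> T (act g x)}) > 0" using finC by (auto simp: card_gt_0_iff)
    moreover have "card (C \<inter> {g. T x \<le> T (act g x)}) \<le> card C" using finC by (intro card_mono) auto
    moreover have "card C > 0" using finC Cne by (simp add: card_gt_0_iff)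
    ultimately show ?thesis unfolding exceed_prob_def C_def[symmetric] m by simp
  qed
  have epm: "exceed_prob G act T \<in> borel_measurable S"
  proof -
    have "(\<lambda>x. if T x \<le> T (act g x) then 1 else 0 :: real) \<in> borel_measurable S" if g: "g \<in> C" for g
    proof -
      have [measurable]: "(\<lambda>x. T (act g x)) \<in> borel_measurable S"
        using measurable_compose[OF A(6) A(7)] g C_def by simp
      have [measurable]: "T \<in> borel_measurable S" by (rule A(7))
      show ?thesis by measurable
    qed
    then have "(\<lambda>x. (\<Sum>g\<in>C. if T x \<le> T (act g x) then 1 else 0 :: real) / real (card C)) \<in> borel_measurable S"
      by (intro borel_measurable_divide borel_measurable_sum) auto
    moreover have "exceed_prob G act T = (\<lambda>x. (\<Sum>g\<in>C. if T x \<le> T (act g x) then 1 else 0 :: real) / real (card C))"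
      by (rule ext) (rule ep)
    ultimately show ?thesis by simp
  qed
  define Q where "Q w = exceed_prob G act T (X w)" for w
  have Qm[measurable]: "Q \<in> borel_measurable M" unfolding Q_def
    using measurable_compose[OF A(8) epm] by (simp add: o_def)
  have Qb: "0 < Q w" "Q w \<le> 1" for w using epb unfolding Q_def by auto
  obtain m :: nat where mdef: "(real B + 1) * \<alpha> = real m" using A(13) Nats_cases by metis
  have "real m > 0" using A(9) mdef[symmetric] by simp
  then have m1: "m \<ge> 1" by simp
  have "real m < real B + 1" using A(10) mdef[symmetric] by (simp add: mult_less_cancel_left1)
  then have mB: "m \<le> B" by simp
  have c1: "crit_count \<alpha> B = int m - 1" unfolding crit_count_def using mdef by simp
  have "real (B - 1) + 1 = real B" using A(12) by simp
  then have "(real (B - 1) + 1) * \<alpha> = real m - \<alpha>" using mdef by (simp add: algebra_simps)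
  moreover have "\<lfloor>real m - \<alpha>\<rfloor> = int m - 1" using A(9,10) by (intro floor_unique) auto
  ultimately have c0: "crit_count \<alpha> (B - 1) = int (m - 1) - 1" unfolding crit_count_def using m1 by simp
  have "(real (B + 1) + 1) * \<alpha> = real m + \<alpha>" using mdef by (simp add: algebra_simps)
  moreover have "\<lfloor>real m + \<alpha>\<rfloor> = int m" using A(9,10) by (intro floor_unique) auto
  ultimately have c2: "crit_count \<alpha> (B + 1) = int m - 1" unfolding crit_count_def by simp
  have pw: "mc_power M G act T X \<alpha> n = integral\<^sup>L M (\<lambda>w. ff n m' (Q w))"
    if "crit_count \<alpha> n = int m' - 1" for n m'
    unfolding mc_power_def Q_def[symmetric]
    using cond_rej_ff[OF less_imp_le[OF Qb(1)] Qb(2) that] by simp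
  have integ: "integrable M (\<lambda>w. ff n m' (Q w))" for n m'
  proof (rule P.integrable_const_bound[where B="\<Sum>j\<le>m' - 1. real (n choose j)"])
    show "AE w in M. norm (ff n m' (Q w)) \<le> (\<Sum>j\<le>m' - 1. real (n choose j))"
      using ff_abs less_imp_le[OF Qb(1)] Qb(2) by auto
    show "(\<lambda>w. ff n m' (Q w)) \<in> borel_measurable M"
      unfolding ff_def Pk_def tt_def by measurable
  qed
  obtain n where nB: "B = Suc n" using A(12) by (cases B) auto
  obtain k where km: "m = Suc k" using m1 by (cases m) auto
  have kn: "k \<le> n" using mB nB km by simp
  have d1: "ff B m q - ff (B - 1) (m - 1) q = (1 - q) * tt n q k" for q
    using Pk_diff1[of n q k] nB km by (simp add: ff_def)
  have d2: "ff B m q - ff (B + 1) m q = q * tt B q k" for q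
    using Pk_Suc[of B q k] km by (simp add: ff_def)
  have "mc_power M G act T X \<alpha> B - mc_power M G act T X \<alpha> (B - 1)
      = integral\<^sup>L M (\<lambda>w. (1 - Q w) * tt n (Q w) k)"
    unfolding pw[OF c1] pw[OF c0] d1[symmetric]
    by (rule Bochner_Integration.integral_diff[symmetric]) (rule integ)+
  also have "\<dots> > 0"
  proof (rule pos_integral[OF A(1) _ _ _ Qm A(11)[folded Q_def]])
    show "integrable M (\<lambda>w. (1 - Q w) * tt n (Q w) k)"
      unfolding d1[symmetric] by (intro Bochner_Integration.integrable_diff integ)
    show "0 \<le> (1 - Q w) * tt n (Q w) k" for w
      using Qb[of w] tt_nonneg[of "Q w" n k] by simp
    show "0 < (1 - Q w) * tt n (Q w) k" if "Q w < 1" for w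
      using Qb[of w] tt_pos[of "Q w" k n] kn that by simp
  qed
  finally have r1: "mc_power M G act T X \<alpha> (B - 1) < mc_power M G act T X \<alpha> B" by simp
  have kB: "k \<le> B" using kn nB by simp
  have "mc_power M G act T X \<alpha> B - mc_power M G act T X \<alpha> (B + 1)
      = integral\<^sup>L M (\<lambda>w. Q w * tt B (Q w) k)"
    unfolding pw[OF c1] pw[OF c2] d2[symmetric]
    by (rule Bochner_Integration.integral_diff[symmetric]) (rule integ)+
  also have "\<dots> > 0"
  proof (rule pos_integral[OF A(1) _ _ _ Qm A(11)[folded Q_def]])
    show "integrable M (\<lambda>w. Q w * tt B (Q w) k)"
      unfolding d2[symmetric] by (intro Bochner_Integration.integrable_diff integ)
    show "0 \<le> Q w * tt B (Q w) k" for w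
      using Qb[of w] tt_nonneg[of "Q w" B k] by simp
    show "0 < Q w * tt B (Q w) k" if "Q w < 1" for w
      using Qb[of w] tt_pos[of "Q w" k B] kB that by simp
  qed
  finally have r2: "mc_power M G act T X \<alpha> (B + 1) < mc_power M G act T X \<alpha> B" by simp
  show ?thesis using c0 c1 c2 m1 r1 r2 by simp
qed

end
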